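(* Let $n\ge2$. There exist constants $0<c_1\le c_2$ depending only on $n$ such that for all $z\in\mathbb{C}\setminus\mathbb{R}$ with $|z|\ge1$, $$c_1\frac{|\Im z|}{|z|^6}\le\psi(z)\le c_2\frac{|\Im z|}{|z|^6}.$$
   Context: For $z\in\mathbb{C}\setminus\mathbb{R}$, let $D_z$ be the set of $(t_1,\dots,t_{n-1})\in\mathbb{R}^{n-1}$ with $\max_{1\le k\le n-1}|t_k|\le 1$, $\left|z\sum_{k=1}^{n-1}t_k\left(z^k-\frac{\Im z^{k+1}}{\Im z}\right)\right|\le 1$ and $\left|\frac{1}{\Im z}\sum_{k=1}^{n-1}t_k\Im z^{k+1}\right|\le 1$, and define $$\psi(z)=\frac{1}{|\Im z|}\int_{D_z}\left|\sum_{k=1}^{n-1}t_k\left((k+1)z^{k}-\frac{\Im z^{k+1}}{\Im z}\right)\right|^2dt_1\dots dt_{n-1}.$$ *)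

theory Defs
  imports "HOL-Analysis.Analysis"
begin

text \<open>Points of R^(n-1) are represented as functions t :: nat => real, extensional on
  the index set {1..n-1}; the measure is the product Lebesgue measure on that set.\<close>

definition cube_measure :: "nat \<Rightarrow> (nat \<Rightarrow> real) measure" where
  "cube_measure n = Pi\<^sub>M {1..n-1} (\<lambda>_. lborel)"

definition Dz :: "nat \<Rightarrow> complex \<Rightarrow> (nat \<Rightarrow> real) set" where
  "Dz n z = {t \<in> PiE {1..n-1} (\<lambda>_. UNIV).
      (\<forall>k\<in>{1..n-1}. \<bar>t k\<bar> \<le> 1) \<and>
      cmod (z * (\<Sum>k=1..n-1. complex_of_real (t k) *
                 (z ^ k - complex_of_real (Im (z ^ (k+1)) / Im z)))) \<le> 1 \<and>
      \<bar>(1 / Im z) * (\<Sum>k=1..n-1. t k * Im (z ^ (k+1)))\<bar> \<le> 1}"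

definition psi :: "nat \<Rightarrow> complex \<Rightarrow> real" where
  "psi n z = (1 / \<bar>Im z\<bar>) *
     (LINT t : Dz n z | cube_measure n.
        (cmod (\<Sum>k=1..n-1. complex_of_real (t k) *
              (of_nat (k+1) * z ^ k - complex_of_real (Im (z ^ (k+1)) / Im z)))) ^ 2)"

end

theory Submission
  imports Defs
begin


definition shear :: "nat set \<Rightarrow> (nat \<Rightarrow> nat \<Rightarrow> real) \<Rightarrow> (nat \<Rightarrow> real) \<Rightarrow> (nat \<Rightarrow> real)" where
  "shear I a u = (\<lambda>k\<in>I. u k + (\<Sum>j\<in>{j\<in>I. k<j}. a k j * u j))"

lemma shear_measurable[measurable]:
  "finite I \<Longrightarrow> shear I a \<in> measurable (PiM I (\<lambda>_. lborel)) (PiM I (\<lambda>_. lborel))"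
  unfolding shear_def
  apply (rule measurable_restrict)
  apply (simp only: measurable_lborel1)
  apply (rule borel_measurable_add)
   apply simp
  apply (rule borel_measurable_sum)
  apply auto
  done

lemma shear_space: "shear I a u \<in> space (PiM I (\<lambda>_. lborel :: real measure))"
  by (simp add: shear_def space_PiM)

lemma shear_upd:
  assumes "\<forall>a'\<in>A. b < a'" "x \<in> space (PiM A (\<lambda>_. lborel :: real measure))"
  shows "shear (insert b A) a (x(b:=y)) = (shear A a x)(b := y + (\<Sum>j\<in>A. a b j * x j))"
proof (rule ext)
  fix k
  have bA: "b \<notin> A" using assms(1) by auto
  show "shear (insert b A) a (x(b:=y)) k = ((shear A a x)(b := y + (\<Sum>j\<in>A. a b j * x j))) k"
  proof (cases "k = b")
    case True
    have "{j\<in>insert b A. b<j} = A" using assms(1) by auto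
    moreover have "(\<Sum>j\<in>A. a b j * (x(b:=y)) j) = (\<Sum>j\<in>A. a b j * x j)"
      using bA by (intro sum.cong) auto
    ultimately show ?thesis using True by (simp add: shear_def)
  next
    case False
    show ?thesis
    proof (cases "k \<in> A")
      case True
      have "{j\<in>insert b A. k<j} = {j\<in>A. k<j}" using assms(1) True by auto
      moreover have "(\<Sum>j\<in>{j\<in>A. k<j}. a k j * (x(b:=y)) j) = (\<Sum>j\<in>{j\<in>A. k<j}. a k j * x j)"
        using bA by (intro sum.cong) auto
      ultimately show ?thesis using True False by (simp add: shear_def)
    next
      case F2: False
      then show ?thesis using False by (simp add: shear_def)
    qed
  qed
qed

lemma shear_nn_integral:
  assumes "finite I" "f \<in> borel_measurable (PiM I (\<lambda>_. lborel :: real measure))"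
  shows "(\<integral>\<^sup>+ u. f (shear I a u) \<partial>PiM I (\<lambda>_. lborel)) = (\<integral>\<^sup>+ t. f t \<partial>PiM I (\<lambda>_. lborel))"
  using assms
proof (induction I arbitrary: f rule: finite_linorder_min_induct)
  case empty
  show ?case
    by (simp add: PiM_empty shear_def nn_integral_count_space_finite)
next
  case (insert b A)
  interpret product_sigma_finite "\<lambda>_::nat. lborel :: real measure" by standard
  have bA: "b \<notin> A" using insert.hyps(2) by auto
  note fm[measurable] = insert.prems
  have fin: "finite (insert b A)" using insert.hyps(1) by simp
  define F where "F w = (\<integral>\<^sup>+ y. f (w(b:=y)) \<partial>lborel)" for w
  have Fm[measurable]: "F \<in> borel_measurable (PiM A (\<lambda>_. lborel))"
    unfolding F_def by measurable
  have "(\<integral>\<^sup>+ u. f (shear (insert b A) a u) \<partial>PiM (insert b A) (\<lambda>_. lborel))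
      = (\<integral>\<^sup>+ x. (\<integral>\<^sup>+ y. f (shear (insert b A) a (x(b:=y))) \<partial>lborel) \<partial>PiM A (\<lambda>_. lborel))"
    by (rule product_nn_integral_insert[OF insert.hyps(1) bA]) (measurable, rule fin)
  also have "\<dots> = (\<integral>\<^sup>+ x. F (shear A a x) \<partial>PiM A (\<lambda>_. lborel))"
  proof (rule nn_integral_cong)
    fix x assume x: "x \<in> space (PiM A (\<lambda>_. lborel :: real measure))"
    let ?w = "shear A a x" and ?c = "\<Sum>j\<in>A. a b j * x j"
    have gm: "(\<lambda>y. f (?w(b:=y))) \<in> borel_measurable borel"
    proof -
      have "(\<lambda>y. f (?w(b:=y))) \<in> borel_measurable lborel"
        using measurable_comp[OF measurable_component_update[OF shear_space bA] fm] by (simp add: comp_def)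
      then show ?thesis by simp
    qed
    have "(\<integral>\<^sup>+ y. f (shear (insert b A) a (x(b:=y))) \<partial>lborel) = (\<integral>\<^sup>+ y. f (?w(b:=?c + 1*y)) \<partial>lborel)"
      using shear_upd[OF insert.hyps(2) x] by (simp add: add.commute)
    also have "\<dots> = (\<integral>\<^sup>+ y. f (?w(b:=y)) \<partial>lborel)"
      using nn_integral_real_affine[OF gm, of 1 ?c] by simp
    finally show "(\<integral>\<^sup>+ y. f (shear (insert b A) a (x(b:=y))) \<partial>lborel) = F (shear A a x)"
      by (simp add: F_def)
  qed
  also have "\<dots> = (\<integral>\<^sup>+ x. F x \<partial>PiM A (\<lambda>_. lborel))"
    by (rule insert.IH[OF Fm])
  also have "\<dots> = (\<integral>\<^sup>+ t. f t \<partial>PiM (insert b A) (\<lambda>_. lborel))"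
    unfolding F_def by (rule product_nn_integral_insert[OF insert.hyps(1) bA fm, symmetric])
  finally show ?case .
qed



lemma shift_sum:
  fixes f :: "nat \<Rightarrow> nat \<Rightarrow> 'a::comm_monoid_add"
  shows "(\<Sum>k=1..m. if k + d \<le> m then f (k+d) k else 0) = (\<Sum>j=1..m. if d+1 \<le> j then f j (j-d) else 0)"
proof -
  have "(\<Sum>k=1..m. if k + d \<le> m then f (k+d) k else 0) = (\<Sum>k\<in>{k\<in>{1..m}. k + d \<le> m}. f (k+d) k)"
    by (rule sum.inter_filter[symmetric]) simp
  also have "\<dots> = (\<Sum>j\<in>{j\<in>{1..m}. d+1 \<le> j}. f j (j-d))"
    by (rule sum.reindex_bij_witness[where i="\<lambda>j. j - d" and j="\<lambda>k. k + d"]) auto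
  also have "\<dots> = (\<Sum>j=1..m. if d+1 \<le> j then f j (j-d) else 0)"
    by (rule sum.inter_filter) simp
  finally show ?thesis .
qed

definition shA :: "complex \<Rightarrow> nat \<Rightarrow> nat \<Rightarrow> real" where
  "shA z k j = (if j = Suc k then -2 * Re z else if j = Suc (Suc k) then (cmod z)^2 else 0)"

lemma sh_eq:
  assumes "k \<in> {1..m}"
  shows "shear {1..m} (shA z) u k = u k + (if Suc k \<le> m then -2 * Re z * u (Suc k) else 0)
            + (if Suc (Suc k) \<le> m then (cmod z)^2 * u (Suc (Suc k)) else 0)"
proof -
  have "(\<Sum>j\<in>{j\<in>{1..m}. k<j}. shA z k j * u j)
     = (\<Sum>j\<in>{j\<in>{1..m}. k<j}. (if j = Suc k then -2 * Re z * u j else 0) + (if j = Suc (Suc k) then (cmod z)^2 * u j else 0))"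
    by (intro sum.cong) (auto simp: shA_def)
  also have "\<dots> = (if Suc k \<le> m then -2 * Re z * u (Suc k) else 0)
            + (if Suc (Suc k) \<le> m then (cmod z)^2 * u (Suc (Suc k)) else 0)"
    using assms by (simp add: sum.distrib sum.delta)
  finally show ?thesis using assms by (simp add: shear_def)
qed

lemma sum_sh:
  fixes e :: "nat \<Rightarrow> complex"
  shows "(\<Sum>k=1..m. of_real (shear {1..m} (shA z) u k) * e k)
    = (\<Sum>j=1..m. of_real (u j) * (e j + (if 2 \<le> j then of_real (-2 * Re z) * e (j-1) else 0)
          + (if 3 \<le> j then of_real ((cmod z)^2) * e (j-2) else 0)))"
proof -
  have "(\<Sum>k=1..m. of_real (shear {1..m} (shA z) u k) * e k)
      = (\<Sum>k=1..m. of_real (u k) * e k + (if k + 1 \<le> m then (\<lambda>j k. of_real (-2 * Re z * u j) * e k) (k+1) k else 0)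
           + (if k + 2 \<le> m then (\<lambda>j k. of_real ((cmod z)^2 * u j) * e k) (k+2) k else 0))"
    apply (rule sum.cong[OF refl])
    apply (subst sh_eq, assumption)
    apply (auto simp: distrib_right)
    done
  also have "\<dots> = (\<Sum>k=1..m. of_real (u k) * e k) + (\<Sum>k=1..m. if k + 1 \<le> m then (\<lambda>j k. of_real (-2 * Re z * u j) * e k) (k+1) k else 0)
           + (\<Sum>k=1..m. if k + 2 \<le> m then (\<lambda>j k. of_real ((cmod z)^2 * u j) * e k) (k+2) k else 0)"
    by (simp add: sum.distrib)
  also have "\<dots> = (\<Sum>k=1..m. of_real (u k) * e k) + (\<Sum>j=1..m. if 1+1 \<le> j then (\<lambda>j k. of_real (-2 * Re z * u j) * e k) j (j-1) else 0)
           + (\<Sum>j=1..m. if 2+1 \<le> j then (\<lambda>j k. of_real ((cmod z)^2 * u j) * e k) j (j-2) else 0)"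
    using shift_sum[where f="\<lambda>j k. of_real (-2 * Re z * u j) * e k" and m=m and d=1]
      shift_sum[where f="\<lambda>j k. of_real ((cmod z)^2 * u j) * e k" and m=m and d=2] by simp
  also have "\<dots> = (\<Sum>j=1..m. of_real (u j) * (e j + (if 2 \<le> j then of_real (-2 * Re z) * e (j-1) else 0)
          + (if 3 \<le> j then of_real ((cmod z)^2) * e (j-2) else 0)))"
    unfolding sum.distrib[symmetric]
    by (intro sum.cong refl) (auto simp: algebra_simps)
  finally show ?thesis .
qed



lemma zq: "z^2 - of_real (2 * Re z) * z + of_real ((cmod z)^2) = (0::complex)"
proof -
  have "of_real (2 * Re z) = z + cnj z" by (simp add: complex_add_cnj)
  moreover have "of_real ((cmod z)^2) = z * cnj z" by (rule complex_norm_square)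
  ultimately show ?thesis by (simp add: power2_eq_square algebra_simps)
qed

lemma zq_pow: "z^(i+2) - of_real (2 * Re z) * z^(i+1) + of_real ((cmod z)^2) * z^i = (0::complex)"
proof -
  have "z^(i+2) - of_real (2 * Re z) * z^(i+1) + of_real ((cmod z)^2) * z^i
      = z^i * (z^2 - of_real (2 * Re z) * z + of_real ((cmod z)^2))"
    by (simp add: algebra_simps power_add power2_eq_square)
  also have "\<dots> = 0" by (simp only: zq mult_zero_right)
  finally show ?thesis .
qed

lemma Im_pow_rec: "Im (z^(i+2)) - 2 * Re z * Im (z^(i+1)) + (cmod z)^2 * Im (z^i) = 0"
proof -
  have "Im (z^(i+2) - of_real (2 * Re z) * z^(i+1) + of_real ((cmod z)^2) * z^i) = 0"
    by (simp only: zq_pow) simp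
  then show ?thesis by simp
qed

lemma sum12:
  fixes E :: "nat \<Rightarrow> complex"
  assumes "m \<ge> 1" "\<And>j. j \<ge> 3 \<Longrightarrow> E j = 0"
  shows "(\<Sum>j=1..m. of_real (u j) * E j) = of_real (u 1) * E 1 + (if 2 \<le> m then of_real (u 2) * E 2 else 0)"
  using assms(1)
proof (induction m)
  case 0 then show ?case by simp
next
  case (Suc m)
  show ?case
  proof (cases "m = 0")
    case True then show ?thesis by simp
  next
    case False
    then have "(\<Sum>j=1..Suc m. of_real (u j) * E j) = (\<Sum>j=1..m. of_real (u j) * E j) + of_real (u (Suc m)) * E (Suc m)"
      by (simp add: sum.cl_ivl_Suc)
    moreover have "(\<Sum>j=1..m. of_real (u j) * E j) = of_real (u 1) * E 1 + (if 2 \<le> m then of_real (u 2) * E 2 else 0)"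
      using Suc False by simp
    ultimately show ?thesis using assms(2)[of "Suc m"] False
      by (cases "m = 1") (auto simp: numeral_2_eq_2)
  qed
qed

definition EE :: "complex \<Rightarrow> (nat \<Rightarrow> complex) \<Rightarrow> nat \<Rightarrow> complex" where
  "EE z e j = e j + (if 2 \<le> j then of_real (-2 * Re z) * e (j-1) else 0)
          + (if 3 \<le> j then of_real ((cmod z)^2) * e (j-2) else 0)"

lemma EE_A1: "EE z (\<lambda>k. z^(k+1)) 1 = z^2" by (simp add: EE_def eval_nat_numeral)
lemma EE_A2: "EE z (\<lambda>k. z^(k+1)) 2 = - of_real ((cmod z)^2) * z"
  using zq_pow[of z 1] unfolding EE_def by (simp add: eval_nat_numeral eq_neg_iff_add_eq_0)
lemma EE_A3: "j \<ge> 3 \<Longrightarrow> EE z (\<lambda>k. z^(k+1)) j = 0"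
proof -
  assume "j \<ge> 3"
  then obtain i where j: "j = i + 3" by (metis add.commute le_iff_add)
  show ?thesis using zq_pow[of z "i+2"] unfolding j EE_def
    by (simp add: power_add eval_nat_numeral)
qed



lemma c_eq:
  assumes "Im z \<noteq> 0"
  shows "complex_of_real (Im (z^k) / Im z) = (z^k - cnj z^k) / (z - cnj z)"
proof -
  have zc: "z - cnj z \<noteq> 0" using assms by (simp add: complex_diff_cnj)
  have 1: "z^k - cnj z^k = of_real (2 * Im (z^k)) * \<i>" using complex_diff_cnj[of "z^k"] by simp
  have 2: "z - cnj z = of_real (2 * Im z) * \<i>" using complex_diff_cnj[of z] by simp
  have "complex_of_real (Im (z^k) / Im z) * (z - cnj z) = of_real (Im (z^k) / Im z * (2 * Im z)) * \<i>"
    unfolding 2 by simp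
  also have "Im (z^k) / Im z * (2 * Im z) = 2 * Im (z^k)" using assms by simp
  finally show ?thesis using zc 1 by (simp add: eq_divide_eq)
qed

lemma reZ: "complex_of_real (2 * Re z) = z + cnj z" by (simp add: complex_add_cnj)
lemma reZ': "complex_of_real (-2 * Re z) = - (z + cnj z)" by (simp add: complex_add_cnj)
lemma rho: "complex_of_real ((cmod z)^2) = z * cnj z" by (rule complex_norm_square)
lemma imZ: "\<i> * complex_of_real (2 * Im z) = z - cnj z" by (simp add: complex_diff_cnj)

lemma linB:
  fixes A1 A2 A3 :: complex and B1 B2 B3 Y x r :: real
  assumes "Y \<noteq> 0"
  shows "(A1 - of_real (B1/Y)) + of_real (-2*x) * (A2 - of_real (B2/Y)) + of_real r * (A3 - of_real (B3/Y))
     = (A1 - of_real (2*x) * A2 + of_real r * A3) - of_real ((B1 - 2*x*B2 + r*B3)/Y)"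
  using assms by (simp add: field_simps)

lemma linC:
  fixes A1 A2 A3 :: complex and B1 B2 B3 Y x r :: real and i :: nat
  assumes "Y \<noteq> 0"
  shows "(of_nat (i+4) * A1 - of_real (B1/Y)) + of_real (-2*x) * (of_nat (i+3) * A2 - of_real (B2/Y)) + of_real r * (of_nat (i+2) * A3 - of_real (B3/Y))
     = of_nat (i+2) * (A1 - of_real (2*x) * A2 + of_real r * A3) + (2 * A1 - of_real (2*x) * A2) - of_real ((B1 - 2*x*B2 + r*B3)/Y)"
  using assms by (simp add: field_simps)

lemma EE_B:
  assumes "Im z \<noteq> 0" "j \<ge> 1"
  shows "EE z (\<lambda>k. z^k - complex_of_real (Im (z^(k+1)) / Im z)) j = (if j = 1 then - cnj z else 0)"
proof -
  have zc: "z - cnj z \<noteq> 0" using assms by (simp add: complex_diff_cnj)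
  consider "j = 1" | "j = 2" | i where "j = i + 3"
    using assms(2) by (metis One_nat_def add.commute add_2_eq_Suc' le_Suc_eq le_add_diff_inverse numeral_3_eq_3 numeral_2_eq_2 not_less_eq_eq le_0_eq)
  then show ?thesis
  proof cases
    case 1 then show ?thesis using zc assms(1)
      unfolding EE_def c_eq[OF assms(1)] by (simp add: field_simps eval_nat_numeral)
  next
    case 2 then show ?thesis using zc
      unfolding EE_def c_eq[OF assms(1)] reZ' rho by (simp add: field_simps eval_nat_numeral)
  next
    case 3
    have e: "i+1+2 = i+3" "i+1+1 = i+2" "i+2+2 = i+4" "i+2+1 = i+3" "i+3-1 = i+2" "i+3-2 = i+1"
      "i+3+1 = i+4" "i+2+1 = i+3" "i+1+1 = i+2" by simp_all
    have h1: "z^(i+3) - of_real (2 * Re z) * z^(i+2) + of_real ((cmod z)^2) * z^(i+1) = 0"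
      using zq_pow[of z "i+1", unfolded e] .
    have h2: "Im (z^(i+4)) - 2 * Re z * Im (z^(i+3)) + (cmod z)^2 * Im (z^(i+2)) = 0"
      using Im_pow_rec[of z "i+2", unfolded e] .
    have "EE z (\<lambda>k. z^k - complex_of_real (Im (z^(k+1)) / Im z)) j
       = (z^(i+3) - of_real (Im (z^(i+4)) / Im z)) + of_real (-2 * Re z) * (z^(i+2) - of_real (Im (z^(i+3)) / Im z))
         + of_real ((cmod z)^2) * (z^(i+1) - of_real (Im (z^(i+2)) / Im z))"
      unfolding EE_def 3 e by simp
    also have "\<dots> = (z^(i+3) - of_real (2 * Re z) * z^(i+2) + of_real ((cmod z)^2) * z^(i+1))
         - of_real ((Im (z^(i+4)) - 2 * Re z * Im (z^(i+3)) + (cmod z)^2 * Im (z^(i+2))) / Im z)"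
      by (rule linB[OF assms(1)])
    also have "\<dots> = 0" unfolding h1 h2 by simp
    finally show ?thesis using 3 by simp
  qed
qed

lemma EE_C:
  assumes "Im z \<noteq> 0" "j \<ge> 1"
  shows "EE z (\<lambda>k. of_nat (k+1) * z^k - complex_of_real (Im (z^(k+1)) / Im z)) j = \<i> * of_real (2 * Im z) * z^(j-1)"
proof -
  have zc: "z - cnj z \<noteq> 0" using assms by (simp add: complex_diff_cnj)
  consider "j = 1" | "j = 2" | i where "j = i + 3"
    using assms(2) by (metis One_nat_def add.commute add_2_eq_Suc' le_Suc_eq le_add_diff_inverse numeral_3_eq_3 numeral_2_eq_2 not_less_eq_eq le_0_eq)
  then show ?thesis
  proof cases
    case 1 then show ?thesis using zc assms(1)
      unfolding EE_def c_eq[OF assms(1)] imZ by (simp add: field_simps eval_nat_numeral)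
  next
    have zc2: "z*z + cnj z * cnj z - z*(cnj z*2) \<noteq> 0"
    proof -
      have "(z - cnj z)^2 \<noteq> 0" using zc by simp
      moreover have "(z - cnj z)^2 = z*z + cnj z * cnj z - z*(cnj z*2)"
        by (simp add: power2_eq_square algebra_simps)
      ultimately show ?thesis by simp
    qed
    case 2 then show ?thesis using zc zc2
      unfolding EE_def c_eq[OF assms(1)] reZ' rho imZ by (simp add: field_simps eval_nat_numeral)
  next
    case 3
    have e: "i+1+2 = i+3" "i+1+1 = i+2" "i+2+2 = i+4" "i+2+1 = i+3" "i+3-1 = i+2" "i+3-2 = i+1"
      "i+3+1 = i+4" "i+2+1 = i+3" "i+1+1 = i+2" by simp_all
    have h1: "z^(i+3) - of_real (2 * Re z) * z^(i+2) + of_real ((cmod z)^2) * z^(i+1) = 0"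
      using zq_pow[of z "i+1", unfolded e] .
    have h2: "Im (z^(i+4)) - 2 * Re z * Im (z^(i+3)) + (cmod z)^2 * Im (z^(i+2)) = 0"
      using Im_pow_rec[of z "i+2", unfolded e] .
    have "EE z (\<lambda>k. of_nat (k+1) * z^k - complex_of_real (Im (z^(k+1)) / Im z)) j
       = (of_nat (i+4) * z^(i+3) - of_real (Im (z^(i+4)) / Im z)) + of_real (-2 * Re z) * (of_nat (i+3) * z^(i+2) - of_real (Im (z^(i+3)) / Im z))
         + of_real ((cmod z)^2) * (of_nat (i+2) * z^(i+1) - of_real (Im (z^(i+2)) / Im z))"
      unfolding EE_def 3 e by simp
    also have "\<dots> = of_nat (i+2) * (z^(i+3) - of_real (2 * Re z) * z^(i+2) + of_real ((cmod z)^2) * z^(i+1))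
         + (2 * z^(i+3) - of_real (2 * Re z) * z^(i+2))
         - of_real ((Im (z^(i+4)) - 2 * Re z * Im (z^(i+3)) + (cmod z)^2 * Im (z^(i+2))) / Im z)"
      by (rule linC[OF assms(1)])
    also have "\<dots> = 2 * z^(i+3) - of_real (2 * Re z) * z^(i+2)" unfolding h1 h2 by simp
    also have "\<dots> = z^(i+2) * (2 * z - of_real (2 * Re z))"
      by (simp add: algebra_simps power_add eval_nat_numeral)
    also have "2 * z - of_real (2 * Re z) = \<i> * of_real (2 * Im z)"
      by (simp add: complex_eq_iff)
    finally show ?thesis using 3 by (simp add: mult.commute)
  qed
qed



lemma Im_mult_of_real: "Im (complex_of_real a * w) = a * Im w" by simp


lemma sum_sh_EE:
  "(\<Sum>k=1..m. of_real (shear {1..m} (shA z) u k) * e k) = (\<Sum>j=1..m. of_real (u j) * EE z e j)"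
  unfolding sum_sh EE_def ..

lemma L_A:
  assumes "m \<ge> 1"
  shows "(\<Sum>k=1..m. shear {1..m} (shA z) u k * Im (z^(k+1)))
       = Im z * (2 * Re z * u 1 - (if 2 \<le> m then (cmod z)^2 * u 2 else 0))"
proof -
  have "(\<Sum>k=1..m. of_real (shear {1..m} (shA z) u k) * z^(k+1))
      = of_real (u 1) * EE z (\<lambda>k. z^(k+1)) 1 + (if 2 \<le> m then of_real (u 2) * EE z (\<lambda>k. z^(k+1)) 2 else 0)"
    unfolding sum_sh_EE by (rule sum12[OF assms]) (rule EE_A3)
  also have "\<dots> = of_real (u 1) * z^2 - (if 2 \<le> m then of_real (u 2 * (cmod z)^2) * z else 0)"
    unfolding EE_A1 EE_A2 by simp
  finally have A: "Im (\<Sum>k=1..m. of_real (shear {1..m} (shA z) u k) * z^(k+1))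
      = Im (of_real (u 1) * z^2 - (if 2 \<le> m then of_real (u 2 * (cmod z)^2) * z else 0))" by simp
  have B: "Im (\<Sum>k=1..m. of_real (shear {1..m} (shA z) u k) * z^(k+1)) = (\<Sum>k=1..m. shear {1..m} (shA z) u k * Im (z^(k+1)))"
    unfolding Im_sum by (intro sum.cong refl) (simp only: Im_mult_of_real)
  have C: "Im (of_real (u 1) * z^2 - (if 2 \<le> m then of_real (u 2 * (cmod z)^2) * z else 0))
     = Im z * (2 * Re z * u 1 - (if 2 \<le> m then (cmod z)^2 * u 2 else 0))"
    by (cases "2 \<le> m") (simp_all add: Im_power2 algebra_simps)
  show ?thesis using A B C by simp
qed

lemma L_B:
  assumes "m \<ge> 1" "Im z \<noteq> 0"
  shows "z * (\<Sum>k=1..m. of_real (shear {1..m} (shA z) u k) * (z^k - of_real (Im (z^(k+1)) / Im z)))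
       = - of_real ((cmod z)^2 * u 1)"
proof -
  have "(\<Sum>k=1..m. of_real (shear {1..m} (shA z) u k) * (z^k - of_real (Im (z^(k+1)) / Im z)))
      = of_real (u 1) * EE z (\<lambda>k. z^k - of_real (Im (z^(k+1)) / Im z)) 1
        + (if 2 \<le> m then of_real (u 2) * EE z (\<lambda>k. z^k - of_real (Im (z^(k+1)) / Im z)) 2 else 0)"
    unfolding sum_sh_EE
  proof (rule sum12[OF assms(1)])
    fix j :: nat assume "3 \<le> j" then show "EE z (\<lambda>k. z^k - of_real (Im (z^(k+1)) / Im z)) j = 0"
      by (subst EE_B[OF assms(2)]) auto
  qed
  also have "\<dots> = - of_real (u 1) * cnj z"
    by (subst EE_B[OF assms(2)], simp)+ simp
  finally show ?thesis using complex_norm_square[of z] by (simp add: algebra_simps)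
qed

lemma L_C:
  assumes "Im z \<noteq> 0"
  shows "(\<Sum>k=1..m. of_real (shear {1..m} (shA z) u k) * (of_nat (k+1) * z^k - of_real (Im (z^(k+1)) / Im z)))
       = \<i> * of_real (2 * Im z) * (\<Sum>j=1..m. of_real (u j) * z^(j-1))"
  unfolding sum_sh_EE sum_distrib_left
  apply (intro sum.cong refl)
  apply (subst EE_C[OF assms])
   apply simp
  apply (simp add: ac_simps)
  done



lemma div_le_self_real: "0 \<le> (a::real) \<Longrightarrow> 1 \<le> p \<Longrightarrow> a / p \<le> a"
  by (simp add: divide_le_eq mult_le_cancel_left1)


lemma upper_box:
  fixes z :: complex
  assumes "cmod z \<ge> 1"
    and hT: "\<forall>k\<in>{1..m}. \<bar>shear {1..m} (shA z) u k\<bar> \<le> 1"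
    and h1: "(cmod z)^2 * \<bar>u 1\<bar> \<le> 1"
    and h2: "\<bar>2 * Re z * u 1 - (if 2 \<le> m then (cmod z)^2 * u 2 else 0)\<bar> \<le> 1"
  shows "j \<in> {1..m} \<Longrightarrow> \<bar>u j\<bar> \<le> 4^j / (cmod z)^2"
proof (induction j rule: less_induct)
  case (less j)
  define p where "p = (cmod z)^2"
  have p1: "1 \<le> p" using assms(1) unfolding p_def by (simp add: one_le_power)
  have ap: "\<bar>Re z\<bar> \<le> p"
  proof -
    have "\<bar>Re z\<bar> \<le> cmod z" by (rule abs_Re_le_cmod)
    also have "cmod z \<le> (cmod z)^2" using assms(1) mult_left_mono[of 1 "cmod z" "cmod z"] by (simp add: power2_eq_square)
    finally show ?thesis unfolding p_def .
  qed
  have ppos: "0 < p" using p1 by simp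
  consider "j = 1" | "j = 2" | "j \<ge> 3" using less.prems by force
  then show ?case
  proof cases
    case 1
    have "\<bar>u 1\<bar> \<le> 1 / p" using h1 ppos unfolding p_def[symmetric] by (simp add: field_simps)
    also have "\<dots> \<le> 4 / p" using ppos by (simp add: divide_right_mono)
    finally show ?thesis using 1 unfolding p_def by simp
  next
    case 2
    then have m2: "2 \<le> m" using less.prems by simp
    have u1: "p * \<bar>u 1\<bar> \<le> 1" using h1 unfolding p_def .
    have A: "p * \<bar>u 2\<bar> \<le> 1 + 2 * \<bar>Re z\<bar> * \<bar>u 1\<bar>"
    proof -
      have "\<bar>2 * Re z * u 1 - p * u 2\<bar> \<le> 1" using h2 m2 unfolding p_def by simp
      moreover have "\<bar>p * u 2\<bar> = p * \<bar>u 2\<bar>" using ppos by (simp add: abs_mult)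
      moreover have "\<bar>2 * Re z * u 1\<bar> = 2 * \<bar>Re z\<bar> * \<bar>u 1\<bar>" by (simp add: abs_mult)
      ultimately show ?thesis by linarith
    qed
    have B: "\<bar>Re z\<bar> * \<bar>u 1\<bar> \<le> p * \<bar>u 1\<bar>" using ap by (simp add: mult_right_mono)
    have "p * \<bar>u 2\<bar> \<le> 16" using A B u1 by linarith
    then show ?thesis using 2 ppos unfolding p_def[symmetric] by (simp add: field_simps)
  next
    case 3
    have jm: "j \<le> m" using less.prems by simp
    have IH1: "\<bar>u (j-1)\<bar> \<le> 4^(j-1) / p" using less.IH[of "j-1"] 3 jm unfolding p_def by force
    have IH2: "\<bar>u (j-2)\<bar> \<le> 4^(j-2) / p" using less.IH[of "j-2"] 3 jm unfolding p_def by force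
    have k: "j - 2 \<in> {1..m}" using 3 jm by auto
    have sj: "Suc (j-2) = j - 1" "Suc (Suc (j-2)) = j" using 3 by auto
    have t: "shear {1..m} (shA z) u (j-2) = u (j-2) + -2 * Re z * u (j-1) + p * u j"
      using sh_eq[OF k, of z u] jm 3 unfolding sj p_def by simp
    have "\<bar>shear {1..m} (shA z) u (j-2)\<bar> \<le> 1" using hT k by blast
    then have A: "p * \<bar>u j\<bar> \<le> 1 + \<bar>u (j-2)\<bar> + 2 * \<bar>Re z\<bar> * \<bar>u (j-1)\<bar>"
    proof -
      have "\<bar>u (j-2) + -2 * Re z * u (j-1) + p * u j\<bar> \<le> 1" using \<open>\<bar>shear {1..m} (shA z) u (j-2)\<bar> \<le> 1\<close> unfolding t .
      moreover have "\<bar>p * u j\<bar> = p * \<bar>u j\<bar>" using ppos by (simp add: abs_mult)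
      moreover have "\<bar>-2 * Re z * u (j-1)\<bar> = 2 * \<bar>Re z\<bar> * \<bar>u (j-1)\<bar>" by (simp add: abs_mult)
      ultimately show ?thesis by linarith
    qed
    have B: "\<bar>u (j-2)\<bar> \<le> 4^(j-2)" using IH2 p1
      by (meson div_le_self_real order_trans zero_le_power zero_le_numeral)
    have C: "\<bar>Re z\<bar> * \<bar>u (j-1)\<bar> \<le> p * (4^(j-1) / p)"
      using ap IH1 by (intro mult_mono) auto
    have D: "p * (4^(j-1) / p) = (4::real)^(j-1)" using ppos by simp
    have "p * \<bar>u j\<bar> \<le> 1 + 4^(j-2) + 2 * 4^(j-1)" using A B C D by linarith
    also have "\<dots> \<le> 4^j"
    proof -
      define i where "i = j - 2"
      have i: "j = i + 2" using 3 unfolding i_def by simp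
      have h: "(1::real) \<le> 4^i" by simp
      show ?thesis unfolding i using h by (simp add: power_add, linarith)
    qed
    finally show ?thesis using ppos unfolding p_def[symmetric] by (simp add: field_simps)
  qed
qed



lemma lower_in:
  fixes z :: complex
  assumes "cmod z \<ge> 1" and hu: "\<forall>j\<in>{1..m}. \<bar>u j\<bar> \<le> 1 / (4 * (cmod z)^2)" and m1: "m \<ge> 1"
  shows "\<forall>k\<in>{1..m}. \<bar>shear {1..m} (shA z) u k\<bar> \<le> 1"
    and "(cmod z)^2 * \<bar>u 1\<bar> \<le> 1"
    and "\<bar>2 * Re z * u 1 - (if 2 \<le> m then (cmod z)^2 * u 2 else 0)\<bar> \<le> 1"
proof -
  define p where "p = (cmod z)^2"
  define d where "d = 1 / (4 * p)"
  have p1: "1 \<le> p" using assms(1) unfolding p_def by (simp add: one_le_power)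
  have ap: "\<bar>Re z\<bar> \<le> p"
  proof -
    have "\<bar>Re z\<bar> \<le> cmod z" by (rule abs_Re_le_cmod)
    also have "cmod z \<le> (cmod z)^2" using assms(1) mult_left_mono[of 1 "cmod z" "cmod z"] by (simp add: power2_eq_square)
    finally show ?thesis unfolding p_def .
  qed
  have ppos: "0 < p" using p1 by simp
  have dpos: "0 \<le> d" using ppos unfolding d_def by simp
  have pd: "p * d = 1/4" using ppos unfolding d_def by simp
  have hu': "\<And>j. j \<in> {1..m} \<Longrightarrow> \<bar>u j\<bar> \<le> d" using hu unfolding d_def p_def by simp
  have B0: "\<bar>(if j \<le> m then a * u j else 0)\<bar> \<le> \<bar>a\<bar> * d" if "1 \<le> j" for a :: real and j :: nat
    using hu'[of j] that dpos by (auto simp: abs_mult intro: mult_left_mono)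
  show "\<forall>k\<in>{1..m}. \<bar>shear {1..m} (shA z) u k\<bar> \<le> 1"
  proof
    fix k assume k: "k \<in> {1..m}"
    have e: "shear {1..m} (shA z) u k = u k + (if Suc k \<le> m then -2 * Re z * u (Suc k) else 0)
            + (if Suc (Suc k) \<le> m then p * u (Suc (Suc k)) else 0)"
      using sh_eq[OF k] unfolding p_def .
    have 1: "\<bar>u k\<bar> \<le> d" using hu' k .
    have 2: "\<bar>(if Suc k \<le> m then -2 * Re z * u (Suc k) else 0)\<bar> \<le> \<bar>-2 * Re z\<bar> * d"
      using B0[of "Suc k" "-2 * Re z"] by simp
    have 3: "\<bar>(if Suc (Suc k) \<le> m then p * u (Suc (Suc k)) else 0)\<bar> \<le> \<bar>p\<bar> * d"
      using B0[of "Suc (Suc k)" p] by simp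
    have 4: "\<bar>-2 * Re z\<bar> * d \<le> 2 * p * d" using ap dpos by (simp add: abs_mult mult_right_mono)
    have 5: "d \<le> p * d" using p1 dpos by (simp add: mult_right_mono mult_le_cancel_right1)
    show "\<bar>shear {1..m} (shA z) u k\<bar> \<le> 1" unfolding e using 1 2 3 4 5 pd ppos by simp
  qed
  show "(cmod z)^2 * \<bar>u 1\<bar> \<le> 1"
  proof -
    have "\<bar>u 1\<bar> \<le> d" using hu' m1 by simp
    then have "p * \<bar>u 1\<bar> \<le> p * d" using ppos by (simp add: mult_left_mono)
    then show ?thesis using pd unfolding p_def by simp
  qed
  show "\<bar>2 * Re z * u 1 - (if 2 \<le> m then (cmod z)^2 * u 2 else 0)\<bar> \<le> 1"
  proof -
    have 1: "\<bar>u 1\<bar> \<le> d" using hu' m1 by simp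
    have a: "\<bar>2 * Re z * u 1\<bar> \<le> 2 * p * d"
      using mult_mono[OF ap 1] dpos ppos by (simp add: abs_mult)
    have b: "\<bar>(if 2 \<le> m then p * u 2 else 0)\<bar> \<le> \<bar>p\<bar> * d" using B0[of 2 p] by simp
    have c: "\<bar>2 * Re z * u 1 - (if 2 \<le> m then p * u 2 else 0)\<bar> \<le> \<bar>2 * Re z * u 1\<bar> + \<bar>(if 2 \<le> m then p * u 2 else 0)\<bar>"
      by (rule abs_triangle_ineq4)
    have "\<bar>p\<bar> = p" using ppos by simp
    then have "\<bar>2 * Re z * u 1 - (if 2 \<le> m then p * u 2 else 0)\<bar> \<le> 1" using a b c pd by linarith
    then show ?thesis unfolding p_def .
  qed
qed



lemma int_upper:
  fixes z :: complex
  assumes "cmod z \<ge> 1" "\<forall>j\<in>{1..m}. \<bar>u j\<bar> \<le> B"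
  shows "cmod (\<Sum>j=1..m. of_real (u j) * z^(j-1)) \<le> real m * B * cmod z^(m-1)"
proof -
  have "cmod (\<Sum>j=1..m. of_real (u j) * z^(j-1)) \<le> (\<Sum>j=1..m. cmod (of_real (u j) * z^(j-1)))"
    by (rule norm_sum)
  also have "\<dots> \<le> (\<Sum>j=1..m. B * cmod z^(m-1))"
  proof (rule sum_mono)
    fix j assume j: "j \<in> {1..m}"
    have b: "\<bar>u j\<bar> \<le> B" using assms(2) j by blast
    have "cmod z^(j-1) \<le> cmod z^(m-1)" using j assms(1) by (intro power_increasing) auto
    then show "cmod (of_real (u j) * z^(j-1)) \<le> B * cmod z^(m-1)"
      using b by (simp add: norm_mult norm_power mult_mono)
  qed
  also have "\<dots> = real m * B * cmod z^(m-1)" by simp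
  finally show ?thesis .
qed

lemma int_lower:
  fixes z :: complex
  assumes "cmod z \<ge> 1" "m \<ge> 1" "d \<ge> 0" "\<bar>u m\<bar> \<ge> d / 2" "\<forall>j\<in>{1..m-1}. \<bar>u j\<bar> \<le> d / (4 * m)"
  shows "cmod (\<Sum>j=1..m. of_real (u j) * z^(j-1)) \<ge> d * cmod z^(m-1) / 4"
proof -
  define a where "a = (\<Sum>j=1..m-1. of_real (u j) * z^(j-1))"
  define b where "b = complex_of_real (u m) * z^(m-1)"
  have mS: "m = Suc (m-1)" using assms(2) by simp
  have split: "(\<Sum>j=1..m. of_real (u j) * z^(j-1)) = a + b"
    unfolding a_def b_def by (subst mS, subst sum.cl_ivl_Suc) (use mS in simp)
  have ca: "cmod a \<le> real (m-1) * (d / (4*m)) * cmod z^(m-1-1)"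
    unfolding a_def by (rule int_upper[OF assms(1) assms(5)])
  have pz: "cmod z^(m-1-1) \<le> cmod z^(m-1)" using assms(1) by (intro power_increasing) auto
  have q: "real (m-1) * (d / (4*m)) \<le> d / 4"
  proof -
    have "real (m-1) \<le> real m" by simp
    then have "real (m-1) * (d / (4*m)) \<le> real m * (d / (4*m))" using assms(3) by (intro mult_right_mono) auto
    also have "\<dots> = d / 4" using assms(2) by simp
    finally show ?thesis .
  qed
  have ca2: "cmod a \<le> d / 4 * cmod z^(m-1)"
  proof -
    have "cmod a \<le> real (m-1) * (d / (4*m)) * cmod z^(m-1)"
      using ca pz assms(3) by (meson order_trans mult_left_mono zero_le_divide_iff zero_le_mult_iff of_nat_0_le_iff zero_le_numeral)
    also have "\<dots> \<le> d / 4 * cmod z^(m-1)" using q by (intro mult_right_mono) auto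
    finally show ?thesis .
  qed
  have cb: "cmod b \<ge> d / 2 * cmod z^(m-1)"
  proof -
    have "cmod b = \<bar>u m\<bar> * cmod z^(m-1)" unfolding b_def by (simp add: norm_mult norm_power)
    moreover have "d / 2 * cmod z^(m-1) \<le> \<bar>u m\<bar> * cmod z^(m-1)" using assms(4) by (intro mult_right_mono) auto
    ultimately show ?thesis by simp
  qed
  have "cmod b \<le> cmod (a + b) + cmod a"
    using norm_triangle_ineq[of "a + b" "-a"] by simp
  then show ?thesis unfolding split using ca2 cb by linarith
qed



lemma Dz_sets: "Dz n z \<in> sets (cube_measure n)"
proof -
  have "Dz n z = {t \<in> space (cube_measure n). (\<forall>k\<in>{1..n-1}. \<bar>t k\<bar> \<le> 1) \<and>
      cmod (z * (\<Sum>k=1..n-1. complex_of_real (t k) *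
                 (z ^ k - complex_of_real (Im (z ^ (k+1)) / Im z)))) \<le> 1 \<and>
      \<bar>(1 / Im z) * (\<Sum>k=1..n-1. t k * Im (z ^ (k+1)))\<bar> \<le> 1}"
    unfolding Dz_def cube_measure_def by (simp add: space_PiM)
  also have "\<dots> \<in> sets (cube_measure n)"
    unfolding cube_measure_def by measurable
  finally show ?thesis .
qed

lemma g_meas: "(\<lambda>t. (cmod (\<Sum>k=1..n-1. complex_of_real (t k) * (w k :: complex))) ^ 2) \<in> borel_measurable (cube_measure n)"
  unfolding cube_measure_def by measurable



lemma box_measure:
  fixes I :: "nat set"
  assumes "finite I" "\<And>i. i \<in> I \<Longrightarrow> a i \<le> b i"
  shows "emeasure (PiM I (\<lambda>_. lborel)) (PiE I (\<lambda>i. {a i..b i})) = ennreal (\<Prod>i\<in>I. (b i - a i))"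
proof -
  interpret product_sigma_finite "\<lambda>_::nat. lborel :: real measure" by standard
  have "emeasure (PiM I (\<lambda>_. lborel)) (PiE I (\<lambda>i. {a i..b i})) = (\<Prod>i\<in>I. emeasure lborel {a i..b i})"
    by (rule emeasure_PiM[OF assms(1)]) simp
  also have "\<dots> = (\<Prod>i\<in>I. ennreal (b i - a i))"
    using assms(2) by (intro prod.cong) auto
  also have "\<dots> = ennreal (\<Prod>i\<in>I. (b i - a i))"
    using assms(2) by (intro prod_ennreal) auto
  finally show ?thesis .
qed

lemma box_sets: "finite I \<Longrightarrow> PiE I (\<lambda>i. {a i..b i}) \<in> sets (PiM I (\<lambda>_. lborel :: real measure))"
  by (rule sets_PiM_I_finite) auto



definition GG :: "nat \<Rightarrow> complex \<Rightarrow> (nat \<Rightarrow> real) \<Rightarrow> real" where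
  "GG n z t = (cmod (\<Sum>k=1..n-1. complex_of_real (t k) *
              (of_nat (k+1) * z ^ k - complex_of_real (Im (z ^ (k+1)) / Im z)))) ^ 2"

lemma psi_GG: "psi n z = (1 / \<bar>Im z\<bar>) * (LINT t : Dz n z | cube_measure n. GG n z t)"
  unfolding psi_def GG_def ..

lemma GG_meas: "GG n z \<in> borel_measurable (cube_measure n)"
  unfolding GG_def by (rule g_meas)

lemma GG_sh:
  assumes "Im z \<noteq> 0"
  shows "GG (Suc m) z (shear {1..m} (shA z) u) = 4 * (Im z)^2 * (cmod (\<Sum>j=1..m. of_real (u j) * z^(j-1)))^2"
proof -
  have "GG (Suc m) z (shear {1..m} (shA z) u) = (cmod (\<i> * of_real (2 * Im z) * (\<Sum>j=1..m. of_real (u j) * z^(j-1))))^2"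
    unfolding GG_def using L_C[OF assms, of m u] by simp
  also have "\<dots> = 4 * (Im z)^2 * (cmod (\<Sum>j=1..m. of_real (u j) * z^(j-1)))^2"
    by (simp add: norm_mult power_mult_distrib)
  finally show ?thesis .
qed

lemma D_sh_iff:
  assumes "Im z \<noteq> 0" "m \<ge> 1"
  shows "shear {1..m} (shA z) u \<in> Dz (Suc m) z \<longleftrightarrow>
    (\<forall>k\<in>{1..m}. \<bar>shear {1..m} (shA z) u k\<bar> \<le> 1) \<and> (cmod z)^2 * \<bar>u 1\<bar> \<le> 1 \<and>
    \<bar>2 * Re z * u 1 - (if 2 \<le> m then (cmod z)^2 * u 2 else 0)\<bar> \<le> 1"
proof -
  have inP: "shear {1..m} (shA z) u \<in> PiE {1..m} (\<lambda>_. UNIV)" by (simp add: shear_def)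
  have B: "cmod (z * (\<Sum>k=1..m. complex_of_real (shear {1..m} (shA z) u k) *
                 (z ^ k - complex_of_real (Im (z ^ (k+1)) / Im z)))) = (cmod z)^2 * \<bar>u 1\<bar>"
    unfolding L_B[OF assms(2,1)] norm_minus_cancel norm_of_real by (simp add: abs_mult)
  have A: "(1 / Im z) * (\<Sum>k=1..m. shear {1..m} (shA z) u k * Im (z ^ (k+1)))
       = 2 * Re z * u 1 - (if 2 \<le> m then (cmod z)^2 * u 2 else 0)"
    unfolding L_A[OF assms(2)] using assms(1) by simp
  show ?thesis unfolding Dz_def mem_Collect_eq diff_Suc_1 A B using inP by blast
qed



lemma N_upper:
  fixes z :: complex and m :: nat
  assumes Y: "Im z \<noteq> 0" and r1: "cmod z \<ge> 1" and m1: "m \<ge> 1"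
  shows "(\<integral>\<^sup>+ t. ennreal (indicator (Dz (Suc m) z) t * GG (Suc m) z t) \<partial>cube_measure (Suc m))
    \<le> ennreal (4 * (Im z)^2 * (real m * (4^m / (cmod z)^2) * cmod z^(m-1))^2 * (2 * 4^m / (cmod z)^2)^m)"
proof -
  define p where "p = (cmod z)^2"
  define K :: real where "K = 4^m"
  define D where "D = Dz (Suc m) z"
  define M where "M = PiM {1..m} (\<lambda>_. lborel :: real measure)"
  define sh where "sh = shear {1..m} (shA z)"
  define Cup where "Cup = 4 * (Im z)^2 * (real m * (K / p) * cmod z^(m-1))^2"
  define Box where "Box = PiE {1..m} (\<lambda>i::nat. {-K/p..K/p})"
  have p1: "1 \<le> p" using r1 unfolding p_def by (simp add: one_le_power)
  have ppos: "0 < p" using p1 by simp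
  have cm: "cube_measure (Suc m) = M" unfolding cube_measure_def M_def by simp
  have Dm: "D \<in> sets M" using Dz_sets[of "Suc m" z] unfolding cm D_def .
  have Gm: "GG (Suc m) z \<in> borel_measurable M" using GG_meas[of "Suc m" z] unfolding cm .
  have fm: "(\<lambda>t. ennreal (indicator D t * GG (Suc m) z t)) \<in> borel_measurable M"
  proof -
    have "(\<lambda>t. indicator D t * GG (Suc m) z t) \<in> borel_measurable M"
      by (rule borel_measurable_times[OF borel_measurable_indicator[OF Dm] Gm])
    then show ?thesis by (rule measurable_compose) simp
  qed
  have "(\<integral>\<^sup>+ t. ennreal (indicator D t * GG (Suc m) z t) \<partial>M)
      = (\<integral>\<^sup>+ u. ennreal (indicator D (sh u) * GG (Suc m) z (sh u)) \<partial>M)"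
    unfolding sh_def M_def by (rule shear_nn_integral[symmetric, OF _ fm[unfolded M_def]]) simp
  also have "\<dots> \<le> (\<integral>\<^sup>+ u. ennreal Cup * indicator Box u \<partial>M)"
  proof (rule nn_integral_mono)
    fix u assume u: "u \<in> space M"
    show "ennreal (indicator D (sh u) * GG (Suc m) z (sh u)) \<le> ennreal Cup * indicator Box u"
    proof (cases "sh u \<in> D")
      case False then show ?thesis by simp
    next
      case True
      then have c: "(\<forall>k\<in>{1..m}. \<bar>sh u k\<bar> \<le> 1) \<and> (cmod z)^2 * \<bar>u 1\<bar> \<le> 1 \<and>
          \<bar>2 * Re z * u 1 - (if 2 \<le> m then (cmod z)^2 * u 2 else 0)\<bar> \<le> 1"
        using D_sh_iff[OF Y m1, of u] unfolding D_def sh_def by simp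
      have bj: "\<forall>j\<in>{1..m}. \<bar>u j\<bar> \<le> K / p"
      proof
        fix j assume j: "j \<in> {1..m}"
        have "\<bar>u j\<bar> \<le> 4^j / p" using upper_box[OF r1, of m u j] c j unfolding sh_def p_def by blast
        also have "\<dots> \<le> K / p" unfolding K_def using j ppos
          by (intro divide_right_mono power_increasing) auto
        finally show "\<bar>u j\<bar> \<le> K / p" .
      qed
      have inB: "u \<in> Box" using u bj unfolding Box_def M_def by (auto simp: space_PiM PiE_iff abs_le_iff)
      have "GG (Suc m) z (sh u) = 4 * (Im z)^2 * (cmod (\<Sum>j=1..m. of_real (u j) * z^(j-1)))^2"
        unfolding sh_def by (rule GG_sh[OF Y])
      also have "\<dots> \<le> Cup" unfolding Cup_def
        using int_upper[OF r1 bj] by (intro mult_left_mono power_mono) auto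
      finally show ?thesis using True inB by (simp add: ennreal_leI)
    qed
  qed
  also have "\<dots> = ennreal Cup * emeasure M Box"
    by (rule nn_integral_cmult_indicator) (simp add: Box_def M_def box_sets)
  also have "emeasure M Box = ennreal ((2 * K / p)^m)"
  proof -
    have "emeasure M Box = ennreal (\<Prod>i\<in>{1..m}. (K/p - -K/p))"
      unfolding M_def Box_def using ppos by (intro box_measure) (auto simp: K_def)
    also have "(\<Prod>i\<in>{1..m}. (K/p - -K/p)) = (2 * K / p)^m" by simp
    finally show ?thesis .
  qed
  also have "ennreal Cup * ennreal ((2 * K / p)^m) = ennreal (Cup * (2 * K / p)^m)"
    using ppos by (simp add: ennreal_mult K_def Cup_def)
  finally show ?thesis unfolding cm D_def Cup_def K_def p_def by simp
qed



lemma prod_last: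
  assumes "m \<ge> 1"
  shows "(\<Prod>i\<in>{1..m}. (if i = m then A else B)) = A * B^(m-1)"
proof -
  have s: "{1..m} = insert m {1..m-1}" using assms by auto
  have "(\<Prod>i\<in>{1..m}. (if i = m then A else B)) = A * (\<Prod>i\<in>{1..m-1}. (if i = m then A else B))"
    unfolding s by (subst prod.insert) auto
  also have "(\<Prod>i\<in>{1..m-1}. (if i = m then A else B)) = (\<Prod>i\<in>{1..m-1}. B)"
    by (intro prod.cong) auto
  finally show ?thesis by simp
qed

lemma N_lower:
  fixes z :: complex and m :: nat
  assumes Y: "Im z \<noteq> 0" and r1: "cmod z \<ge> 1" and m1: "m \<ge> 1"
  shows "ennreal (4 * (Im z)^2 * ((1 / (4 * (cmod z)^2)) * cmod z^(m-1) / 4)^2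
            * ((1 / (4 * (cmod z)^2)) / 2 * (2 * ((1 / (4 * (cmod z)^2)) / (4 * real m)))^(m-1)))
    \<le> (\<integral>\<^sup>+ t. ennreal (indicator (Dz (Suc m) z) t * GG (Suc m) z t) \<partial>cube_measure (Suc m))"
proof -
  define p where "p = (cmod z)^2"
  define d where "d = 1 / (4 * p)"
  define e where "e = d / (4 * real m)"
  define D where "D = Dz (Suc m) z"
  define M where "M = PiM {1..m} (\<lambda>_. lborel :: real measure)"
  define sh where "sh = shear {1..m} (shA z)"
  define Clo where "Clo = 4 * (Im z)^2 * (d * cmod z^(m-1) / 4)^2"
  define a where "a i = (if i = m then d/2 else -e)" for i :: nat
  define b where "b i = (if i = m then d else e)" for i :: nat
  define Box where "Box = PiE {1..m} (\<lambda>i::nat. {a i..b i})"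
  have p1: "1 \<le> p" using r1 unfolding p_def by (simp add: one_le_power)
  have ppos: "0 < p" using p1 by simp
  have dpos: "0 < d" using ppos unfolding d_def by simp
  have epos: "0 < e" using dpos m1 unfolding e_def by simp
  have ed: "e \<le> d" unfolding e_def using dpos m1 by (simp add: field_simps)
  have cm: "cube_measure (Suc m) = M" unfolding cube_measure_def M_def by simp
  have Dm: "D \<in> sets M" using Dz_sets[of "Suc m" z] unfolding cm D_def .
  have Gm: "GG (Suc m) z \<in> borel_measurable M" using GG_meas[of "Suc m" z] unfolding cm .
  have fm: "(\<lambda>t. ennreal (indicator D t * GG (Suc m) z t)) \<in> borel_measurable M"
  proof -
    have "(\<lambda>t. indicator D t * GG (Suc m) z t) \<in> borel_measurable M"
      by (rule borel_measurable_times[OF borel_measurable_indicator[OF Dm] Gm])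
    then show ?thesis by (rule measurable_compose) simp
  qed
  have ab: "\<And>i. a i \<le> b i" unfolding a_def b_def using dpos epos by auto
  have "ennreal Clo * emeasure M Box = (\<integral>\<^sup>+ u. ennreal Clo * indicator Box u \<partial>M)"
    by (rule nn_integral_cmult_indicator[symmetric]) (simp add: Box_def M_def box_sets)
  also have "\<dots> \<le> (\<integral>\<^sup>+ u. ennreal (indicator D (sh u) * GG (Suc m) z (sh u)) \<partial>M)"
  proof (rule nn_integral_mono)
    fix u assume u: "u \<in> space M"
    show "ennreal Clo * indicator Box u \<le> ennreal (indicator D (sh u) * GG (Suc m) z (sh u))"
    proof (cases "u \<in> Box")
      case False then show ?thesis by simp
    next
      case True
      then have ub: "\<And>j. j \<in> {1..m} \<Longrightarrow> a j \<le> u j \<and> u j \<le> b j" unfolding Box_def by auto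
      have bd: "\<forall>j\<in>{1..m}. \<bar>u j\<bar> \<le> 1 / (4 * (cmod z)^2)"
      proof
        fix j assume j: "j \<in> {1..m}"
        show "\<bar>u j\<bar> \<le> 1 / (4 * (cmod z)^2)"
          using ub[OF j] ed dpos unfolding a_def b_def d_def[symmetric] p_def[symmetric]
          by (auto split: if_splits)
      qed
      have inD: "sh u \<in> D"
        unfolding D_def sh_def D_sh_iff[OF Y m1] using lower_in[OF r1 bd m1] by blast
      have um: "\<bar>u m\<bar> \<ge> d / 2" using ub[of m] m1 dpos unfolding a_def b_def by auto
      have uo: "\<forall>j\<in>{1..m-1}. \<bar>u j\<bar> \<le> d / (4 * m)"
      proof
        fix j assume j: "j \<in> {1..m-1}"
        then have "j \<in> {1..m}" "j \<noteq> m" by auto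
        then show "\<bar>u j\<bar> \<le> d / (4 * m)" using ub[of j] unfolding a_def b_def e_def by auto
      qed
      have "Clo \<le> 4 * (Im z)^2 * (cmod (\<Sum>j=1..m. of_real (u j) * z^(j-1)))^2"
        unfolding Clo_def using int_lower[OF r1 m1 _ um uo] dpos
        by (intro mult_left_mono power_mono) auto
      also have "\<dots> = GG (Suc m) z (sh u)"
        unfolding sh_def by (rule GG_sh[OF Y, symmetric])
      finally show ?thesis using True inD by (simp add: ennreal_leI)
    qed
  qed
  also have "\<dots> = (\<integral>\<^sup>+ t. ennreal (indicator D t * GG (Suc m) z t) \<partial>M)"
    unfolding sh_def M_def by (rule shear_nn_integral[OF _ fm[unfolded M_def]]) simp
  finally have main: "ennreal Clo * emeasure M Box \<le> (\<integral>\<^sup>+ t. ennreal (indicator D t * GG (Suc m) z t) \<partial>M)" .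
  have "emeasure M Box = ennreal (d / 2 * (2 * e)^(m-1))"
  proof -
    have "emeasure M Box = ennreal (\<Prod>i\<in>{1..m}. (b i - a i))"
      unfolding M_def Box_def using ab by (intro box_measure) auto
    also have "(\<Prod>i\<in>{1..m}. (b i - a i)) = (\<Prod>i\<in>{1..m}. (if i = m then d/2 else 2*e))"
      unfolding a_def b_def by (intro prod.cong) auto
    also have "\<dots> = d / 2 * (2 * e)^(m-1)" by (rule prod_last[OF m1])
    finally show ?thesis .
  qed
  moreover have c0: "0 \<le> Clo" by (simp add: Clo_def)
  moreover have x0: "0 \<le> d / 2 * (2 * e)^(m-1)" using dpos epos by simp
  ultimately have "ennreal Clo * emeasure M Box = ennreal (Clo * (d / 2 * (2 * e)^(m-1)))"
    by (simp only: ennreal_mult)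
  then show ?thesis using main unfolding cm D_def Clo_def d_def e_def p_def by simp
qed



lemma r2k: "((r::real)^2)^k = (r^k)^2"
  by (metis power_mult mult.commute)

lemma U_eq:
  fixes r Y :: real and k :: nat
  assumes "r \<noteq> 0"
  shows "4 * Y^2 * (real (Suc k) * (4^(Suc k) / r^2) * r^k)^2 * (2 * 4^(Suc k) / r^2)^(Suc k)
       = (4 * real (Suc k)^2 * (4^(Suc k))^2 * (2 * 4^(Suc k))^(Suc k)) * Y^2 / r^6"
proof -
  define A :: real where "A = 4^(Suc k)"
  define B :: real where "B = (2 * 4^(Suc k))^(Suc k)"
  define q where "q = r^k"
  have q0: "q \<noteq> 0" using assms unfolding q_def by simp
  have e: "(2 * 4^(Suc k) / r^2)^(Suc k) = B / (r^2 * q^2)"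
    unfolding B_def q_def power_divide by (simp add: r2k)
  have "4 * Y^2 * (real (Suc k) * (A / r^2) * q)^2 * (B / (r^2 * q^2))
      = (4 * real (Suc k)^2 * A^2 * B) * Y^2 / r^6"
    using assms q0 by (simp add: field_simps power2_eq_square eval_nat_numeral)
  then show ?thesis unfolding e A_def B_def q_def .
qed

lemma L_eq:
  fixes r Y :: real and k :: nat
  assumes "r \<noteq> 0"
  shows "4 * Y^2 * ((1 / (4 * r^2)) * r^k / 4)^2 * ((1 / (4 * r^2)) / 2 * (2 * ((1 / (4 * r^2)) / (4 * real (Suc k))))^k)
       = (1 / (512 * (8 * real (Suc k))^k)) * Y^2 / r^6"
proof -
  define q where "q = r^k"
  define mm where "mm = real (Suc k)"
  have q0: "q \<noteq> 0" using assms unfolding q_def by simp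
  have mm0: "mm > 0" unfolding mm_def by simp
  have e: "(2 * ((1 / (4 * r^2)) / (4 * mm)))^k = 1 / ((8 * mm)^k * q^2)"
  proof -
    have "2 * ((1 / (4 * r^2)) / (4 * mm)) = 1 / ((8 * mm) * r^2)" using assms mm0 by (simp add: field_simps)
    then show ?thesis unfolding q_def by (simp add: power_one_over power_mult_distrib r2k)
  qed
  have "4 * Y^2 * ((1 / (4 * r^2)) * q / 4)^2 * ((1 / (4 * r^2)) / 2 * (1 / ((8 * mm)^k * q^2)))
      = (1 / (512 * (8 * mm)^k)) * Y^2 / r^6"
    using assms q0 mm0 by (simp add: field_simps power2_eq_square eval_nat_numeral)
  then show ?thesis unfolding mm_def[symmetric] e q_def .
qed



theorem proposition3:
  fixes n :: nat
  assumes "n \<ge> 2"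
  shows "\<exists>c1 c2 :: real. 0 < c1 \<and> c1 \<le> c2 \<and>
           (\<forall>z :: complex. Im z \<noteq> 0 \<and> cmod z \<ge> 1 \<longrightarrow>
              c1 * \<bar>Im z\<bar> / cmod z ^ 6 \<le> psi n z \<and>
              psi n z \<le> c2 * \<bar>Im z\<bar> / cmod z ^ 6)"
proof -
  obtain k where n: "n = Suc (Suc k)" using assms by (metis add_2_eq_Suc le_add_diff_inverse)
  define C1 :: real where "C1 = 1 / (512 * (8 * real (Suc k))^k)"
  define C2 :: real where "C2 = 4 * real (Suc k)^2 * (4^(Suc k))^2 * (2 * 4^(Suc k))^(Suc k)"
  have C1pos: "0 < C1" unfolding C1_def by simp
  have C2pos: "0 \<le> C2" unfolding C2_def by simp
  have main: "C1 * \<bar>Im z\<bar> / cmod z ^ 6 \<le> psi n z \<and> psi n z \<le> (C1 + C2) * \<bar>Im z\<bar> / cmod z ^ 6"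
    if Y: "Im z \<noteq> 0" and r1: "cmod z \<ge> 1" for z
  proof -
    define N where "N = (\<integral>\<^sup>+ t. ennreal (indicator (Dz (Suc (Suc k)) z) t * GG (Suc (Suc k)) z t) \<partial>cube_measure (Suc (Suc k)))"
    have r0: "cmod z \<noteq> 0" using r1 by auto
    have up: "N \<le> ennreal (C2 * (Im z)^2 / cmod z ^ 6)"
      using N_upper[OF Y r1, of "Suc k"] U_eq[OF r0, of "Im z" k] unfolding N_def C2_def by simp
    have lo: "ennreal (C1 * (Im z)^2 / cmod z ^ 6) \<le> N"
      using N_lower[OF Y r1, of "Suc k"] L_eq[OF r0, of "Im z" k] unfolding N_def C1_def by simp
    have Ntop: "N < top" using up by (meson ennreal_less_top le_less_trans)
    have Dm: "Dz (Suc (Suc k)) z \<in> sets (cube_measure (Suc (Suc k)))" by (rule Dz_sets)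
    have Gm: "GG (Suc (Suc k)) z \<in> borel_measurable (cube_measure (Suc (Suc k)))" by (rule GG_meas)
    have L: "(LINT t : Dz (Suc (Suc k)) z | cube_measure (Suc (Suc k)). GG (Suc (Suc k)) z t) = enn2real N"
      unfolding set_lebesgue_integral_def N_def
    proof -
      have "(\<lambda>t. indicator (Dz (Suc (Suc k)) z) t * GG (Suc (Suc k)) z t) \<in> borel_measurable (cube_measure (Suc (Suc k)))"
        by (rule borel_measurable_times[OF borel_measurable_indicator[OF Dm] Gm])
      then have "integral\<^sup>L (cube_measure (Suc (Suc k))) (\<lambda>t. indicator (Dz (Suc (Suc k)) z) t * GG (Suc (Suc k)) z t)
          = enn2real (\<integral>\<^sup>+ t. ennreal (indicator (Dz (Suc (Suc k)) z) t * GG (Suc (Suc k)) z t) \<partial>cube_measure (Suc (Suc k)))"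
        by (rule integral_eq_nn_integral) (simp add: GG_def)
      then show "integral\<^sup>L (cube_measure (Suc (Suc k))) (\<lambda>t. indicator (Dz (Suc (Suc k)) z) t *\<^sub>R GG (Suc (Suc k)) z t)
          = enn2real (\<integral>\<^sup>+ t. ennreal (indicator (Dz (Suc (Suc k)) z) t * GG (Suc (Suc k)) z t) \<partial>cube_measure (Suc (Suc k)))"
        by simp
    qed
    have Lup: "enn2real N \<le> C2 * (Im z)^2 / cmod z ^ 6"
      using enn2real_mono[OF up] C2pos by simp
    have Llo: "C1 * (Im z)^2 / cmod z ^ 6 \<le> enn2real N"
      using enn2real_mono[OF lo Ntop] C1pos by simp
    have psi: "psi n z = (1 / \<bar>Im z\<bar>) * enn2real N" unfolding psi_GG n L ..
    have Ypos: "0 < \<bar>Im z\<bar>" using Y by simp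
    have sq: "(Im z)^2 = \<bar>Im z\<bar>^2" by simp
    have gen: "\<And>C a r. 0 < (a::real) \<Longrightarrow> (1 / a) * (C * a^2 / r) = C * a / r"
      by (simp add: power2_eq_square)
    have a: "C1 * \<bar>Im z\<bar> / cmod z ^ 6 = (1 / \<bar>Im z\<bar>) * (C1 * (Im z)^2 / cmod z ^ 6)"
      unfolding sq using gen[OF Ypos] by simp
    have b: "(1 / \<bar>Im z\<bar>) * (C2 * (Im z)^2 / cmod z ^ 6) = C2 * \<bar>Im z\<bar> / cmod z ^ 6"
      unfolding sq using gen[OF Ypos] by simp
    have c: "C2 * \<bar>Im z\<bar> / cmod z ^ 6 \<le> (C1 + C2) * \<bar>Im z\<bar> / cmod z ^ 6"
      using C1pos r0 by (intro divide_right_mono mult_right_mono) auto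
    have "C1 * \<bar>Im z\<bar> / cmod z ^ 6 \<le> psi n z"
      unfolding a psi using Llo Ypos by (intro mult_left_mono) auto
    moreover have "psi n z \<le> (1 / \<bar>Im z\<bar>) * (C2 * (Im z)^2 / cmod z ^ 6)"
      unfolding psi using Lup Ypos by (intro mult_left_mono) auto
    ultimately show ?thesis using b c by linarith
  qed
  show ?thesis
    by (rule exI[of _ C1], rule exI[of _ "C1 + C2"]) (use C1pos C2pos main in auto)
qed


end
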